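(* Let $b(v,s)$ be the Dutch-phase equilibrium bidding function. It is the solution of $$\frac{\partial b(v,s)}{\partial v}=\frac{g(v)}{G(v)}\,\frac{c(s-b(v,s))v-b(v,s)}{1+c'(s-b(v,s))v},\qquad b(0,s)=0,$$ assumed increasing in $v$ and sufficiently smooth that mixed partial derivatives commute. Then $\frac{\partial b(v,s)}{\partial s}<1$ for all relevant $v$ and $s$.
   Context: Values are i.i.d. on $[0,1]$ with twice differentiable CDF $F$ and density $f$; $n\ge2$ bidders. Write $G=F^{n-1}$ and $g=G'$. Time cost: $c:[0,1]\to\mathbb{R}_+$ differentiable with $c(0)=1$ and $c'>-1$, and either $c\equiv1$ or $c'<0$ everywhere. It is also assumed twice differentiable, as the argument uses $c''$. $s\in[0,1]$ is the starting price of an Istanbul Flower Auction. A winner with value $v$ paying $p$ after duration $t$ gets $c(t)v-p$, and the Dutch phase descends from $s$, so its duration is $s-b$. *)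

theory Defs
  imports "HOL-Analysis.Analysis"
begin

end

theory Submission
  imports Defs
begin

lemma first_zero:
  fixes M :: "real \<Rightarrow> real"
  assumes cont: "continuous_on {0..V} M" and M0: "M 0 = 1" and V: "V \<ge> 0" and MV: "M V \<le> 0"
  shows "\<exists>v1 v0. 0 \<le> v1 \<and> v1 < v0 \<and> v0 \<le> V \<and> M v0 = 0 \<and> M v1 \<ge> 1 \<and>
           (\<forall>x. v1 < x \<and> x < v0 \<longrightarrow> 0 < M x \<and> M x < 1)"
proof -
  define S where "S = {0..V} \<inter> M -` {..0}"
  have "closed S" unfolding S_def by (rule continuous_closed_preimage[OF cont]) auto
  moreover have "bounded S" unfolding S_def by (rule bounded_subset[of "{0..V}"]) auto
  ultimately have "compact S" by (simp add: compact_eq_bounded_closed)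
  moreover have "V \<in> S" using V MV by (auto simp: S_def)
  ultimately obtain v0 where v0: "v0 \<in> S" "\<forall>y\<in>S. v0 \<le> y"
    using compact_attains_inf[of S] by blast
  have v0r: "0 \<le> v0" "v0 \<le> V" "M v0 \<le> 0" using v0 by (auto simp: S_def)
  have "v0 \<noteq> 0" using v0r M0 by auto
  with v0r have v0p: "0 < v0" by auto
  have Mv0: "M v0 = 0"
  proof (rule ccontr)
    assume "M v0 \<noteq> 0"
    hence "M v0 < 0" using v0r by auto
    have "continuous_on {0..v0} M" using cont v0r by (auto intro: continuous_on_subset)
    then obtain x where x: "0 \<le> x" "x \<le> v0" "M x = 0"
      using IVT2'[of M v0 0 0] v0r M0 by auto
    have "x \<in> S" using x v0r by (auto simp: S_def)
    hence "v0 \<le> x" using v0 by auto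
    with x \<open>M v0 < 0\<close> show False by auto
  qed
  define T where "T = {0..v0} \<inter> M -` {1..}"
  have c2: "continuous_on {0..v0} M" using cont v0r by (auto intro: continuous_on_subset)
  have "closed T" unfolding T_def by (rule continuous_closed_preimage[OF c2]) auto
  moreover have "bounded T" unfolding T_def by (rule bounded_subset[of "{0..v0}"]) auto
  ultimately have "compact T" by (simp add: compact_eq_bounded_closed)
  moreover have "0 \<in> T" using v0p M0 by (auto simp: T_def)
  ultimately obtain v1 where v1: "v1 \<in> T" "\<forall>y\<in>T. y \<le> v1"
    using compact_attains_sup[of T] by blast
  have v1r: "0 \<le> v1" "v1 \<le> v0" "M v1 \<ge> 1" using v1 by (auto simp: T_def)
  have "v1 \<noteq> v0" using v1r Mv0 by auto
  hence "v1 < v0" using v1r by auto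
  moreover have "\<forall>x. v1 < x \<and> x < v0 \<longrightarrow> 0 < M x \<and> M x < 1"
  proof (intro allI impI)
    fix x assume x: "v1 < x \<and> x < v0"
    have "x \<notin> S" using x v0 by force
    hence "0 < M x" using x v1r v0r by (auto simp: S_def)
    moreover have "x \<notin> T" using x v1 by force
    hence "M x < 1" using x v1r v0r by (auto simp: T_def)
    ultimately show "0 < M x \<and> M x < 1" by simp
  qed
  ultimately show ?thesis using v1r v0r Mv0 by blast
qed

lemma growth:
  fixes M M' :: "real \<Rightarrow> real"
  assumes "v1 < v0" "continuous_on {v1..v0} M"
    and "\<And>x. v1 < x \<Longrightarrow> x < v0 \<Longrightarrow> (M has_real_derivative M' x) (at x) \<and> M' x \<ge> - K * M x"
    and "M v1 > 0"
  shows "M v0 > 0"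
proof -
  define E where "E x = M x * exp (K * x)" for x
  have "E v1 \<le> E v0"
  proof (rule DERIV_nonneg_imp_increasing_open[of v1 v0 E])
    show "v1 \<le> v0" using assms by simp
    show "continuous_on {v1..v0} E" unfolding E_def
      by (intro continuous_intros assms(2))
    fix x assume x: "v1 < x" "x < v0"
    have d: "(M has_real_derivative M' x) (at x)" "M' x \<ge> - K * M x" using assms(3)[OF x] by auto
    have "(E has_real_derivative (M' x * exp (K*x) + M x * (exp (K*x) * K))) (at x)"
      unfolding E_def by (auto intro!: derivative_eq_intros d(1))
    moreover have "M' x * exp (K*x) + M x * (exp (K*x) * K) = (M' x + K * M x) * exp (K*x)"
      by (simp add: algebra_simps)
    moreover have "(M' x + K * M x) * exp (K*x) \<ge> 0" using d(2) by simp
    ultimately show "\<exists>y. (E has_real_derivative y) (at x) \<and> 0 \<le> y" by metis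
  qed
  moreover have "E v1 > 0" using assms(4) by (simp add: E_def)
  ultimately have "E v0 > 0" by simp
  thus ?thesis by (simp add: E_def zero_less_mult_iff)
qed

lemma qb: fixes e x d0 \<delta> :: real
  assumes "\<delta> = 1 + d0" "\<delta> > 0" "e \<ge> d0" "0 < x" "x < 1"
  shows "e / (1 + e * x) \<ge> - (1/\<delta>)"
proof (cases "e \<ge> 0")
  case True
  hence "e / (1 + e * x) \<ge> 0" using assms by simp
  moreover have "1/\<delta> > 0" using assms by simp
  ultimately show ?thesis by linarith
next
  case False
  have "e * x \<ge> e" using False assms by (simp add: mult_le_cancel_left1)
  hence w: "1 + e * x \<ge> \<delta>" using assms by simp
  have "(e + 1) * \<delta> \<ge> 0" using assms by simp
  hence e1: "e * \<delta> \<ge> - \<delta>" by (simp add: algebra_simps)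
  have "- (1/\<delta>) * (1 + e*x) \<le> e"
  proof -
    have "- (1 + e*x) \<le> e * \<delta>" using w e1 by linarith
    thus ?thesis using assms(2) by (simp add: field_simps)
  qed
  thus ?thesis using w assms(2) by (simp add: le_divide_eq)
qed

theorem lemma2:
  fixes n :: nat
    and F f df :: "real \<Rightarrow> real"
    and c dc ddc :: "real \<Rightarrow> real"
    and b bv bs bvs :: "real \<Rightarrow> real \<Rightarrow> real"
  assumes n: "n \<ge> 2"
    and F_cdf: "F 0 = 0" "F 1 = 1" "mono_on {0..1} F"
    and F_deriv: "\<forall>x\<in>{0..1}. (F has_real_derivative f x) (at x within {0..1})"
    and f_deriv: "\<forall>x\<in>{0..1}. (f has_real_derivative df x) (at x within {0..1})"
    and c_deriv: "\<forall>t\<in>{0..1}. (c has_real_derivative dc t) (at t within {0..1})"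
    and dc_deriv: "\<forall>t\<in>{0..1}. (dc has_real_derivative ddc t) (at t within {0..1})"
    and c_nonneg: "\<forall>t\<in>{0..1}. c t \<ge> 0"
    and c0: "c 0 = 1"
    and dc_gt: "\<forall>t\<in>{0..1}. dc t > -1"
    and c_cases: "(\<forall>t\<in>{0..1}. c t = 1) \<or> (\<forall>t\<in>{0..1}. dc t < 0)"
    and b_dv: "\<forall>v\<in>{0..1}. \<forall>s\<in>{0..1}.
                 ((\<lambda>w. b w s) has_real_derivative bv v s) (at v within {0..1})"
    and b_ds: "\<forall>v\<in>{0..1}. \<forall>s\<in>{0..1}.
                 ((\<lambda>r. b v r) has_real_derivative bs v s) (at s within {0..1})"
    and bv_ds: "\<forall>v\<in>{0..1}. \<forall>s\<in>{0..1}.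
                 ((\<lambda>r. bv v r) has_real_derivative bvs v s) (at s within {0..1})"
    and bs_dv: "\<forall>v\<in>{0..1}. \<forall>s\<in>{0..1}.
                 ((\<lambda>w. bs w s) has_real_derivative bvs v s) (at v within {0..1})"
    and bvs_cont: "continuous_on ({0..1} \<times> {0..1}) (\<lambda>(v, s). bvs v s)"
    and b_incr: "\<forall>s\<in>{0..1}. strict_mono_on {0..1} (\<lambda>v. b v s)"
    and b_init: "\<forall>s\<in>{0..1}. b 0 s = 0"
    and b_ode: "\<forall>v\<in>{0<..1}. \<forall>s\<in>{0..1}. s - b v s \<in> {0..1} \<longrightarrow>
                 bv v s = (real (n - 1) * F v ^ (n - 2) * f v) / (F v ^ (n - 1))
                          * ((c (s - b v s) * v - b v s) / (1 + dc (s - b v s) * v))"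
  shows "\<forall>v\<in>{0..1}. \<forall>s\<in>{0<..<1}. (\<forall>w\<in>{0..v}. b w s < s) \<longrightarrow> bs v s < 1"
  proof (intro ballI impI)
  fix V s assume V: "V \<in> {0..1}" and s: "s \<in> {0<..<1}" and hyp: "\<forall>w\<in>{0..V}. b w s < s"
  have s01: "0 < s" "s < 1" using s by auto
  have V01: "0 \<le> V" "V \<le> 1" using V by auto
  have sI: "s \<in> {0..1}" using s01 by auto
  have bnn: "b v r \<ge> 0" if "v \<in> {0..1}" "r \<in> {0..1}" for v r
  proof (cases "v = 0")
    case True thus ?thesis using b_init that by simp
  next
    case False
    have sm: "strict_mono_on {0..1} (\<lambda>v. b v r)" using b_incr that(2) by blast
    have "0 < v" using that(1) False by simp
    hence "b 0 r < b v r" using strict_mono_onD[OF sm, of 0 v] that(1) by simp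
    thus ?thesis using b_init that by simp
  qed
  have tpos: "0 < s - b v s" "s - b v s < 1" if "v \<in> {0..V}" for v
  proof -
    have "v \<in> {0..1}" using that V01 by simp
    hence "b v s \<ge> 0" using bnn[of v s] sI by blast
    moreover have "b v s < s" using hyp that by blast
    ultimately show "0 < s - b v s" "s - b v s < 1" using s01 by simp_all
  qed
  have dc_cont: "continuous_on {0..1} dc" by (rule DERIV_continuous_on[where D=ddc]) (use dc_deriv in blast)
  obtain x0 where x0: "x0 \<in> {0..1}" "\<forall>y\<in>{0..1}. dc x0 \<le> dc y"
    using continuous_attains_inf[OF compact_Icc _ dc_cont] by fastforce
  define \<delta> where "\<delta> = 1 + dc x0"
  have \<delta>pos: "\<delta> > 0" using dc_gt x0(1) unfolding \<delta>_def by force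
  define K where "K = 1 / \<delta>"
  define M where "M v = (1 - bs v s) * (1 + dc (s - b v s) * v)" for v
  have bs_c1: "continuous_on {0..1} (\<lambda>w. bs w s)"
    by (rule DERIV_continuous_on[where D="\<lambda>w. bvs w s"]) (use bs_dv sI in blast)
  have bs_c: "continuous_on {0..V} (\<lambda>w. bs w s)"
    by (rule continuous_on_subset[OF bs_c1]) (use V01 in auto)
  have b_c1: "continuous_on {0..1} (\<lambda>w. b w s)"
    by (rule DERIV_continuous_on[where D="\<lambda>w. bv w s"]) (use b_dv sI in blast)
  have b_c: "continuous_on {0..V} (\<lambda>w. s - b w s)"
    by (intro continuous_intros continuous_on_subset[OF b_c1]) (use V01 in auto)
  have dcb_c: "continuous_on {0..V} (\<lambda>w. dc (s - b w s))"
    by (rule continuous_on_compose2[OF dc_cont b_c]) (use tpos in fastforce)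
  have M_c: "continuous_on {0..V} M" unfolding M_def
    by (intro continuous_intros bs_c dcb_c)
  have bs0: "bs 0 s = 0"
  proof -
    have "((\<lambda>r. b 0 r) has_real_derivative bs 0 s) (at s within {0..1})"
      using b_ds sI by simp
    hence "((\<lambda>r. b 0 r) has_real_derivative bs 0 s) (at s)"
      using at_within_Icc_at[of 0 s 1] s01 by simp
    moreover have "((\<lambda>r. b 0 r) has_real_derivative 0) (at s)"
      by (rule has_field_derivative_transform_within_open[of "\<lambda>r. 0" 0 s "{0<..<1}"])
         (use s01 b_init in auto)
    ultimately show ?thesis by (rule DERIV_unique)
  qed
  have M0: "M 0 = 1" by (simp add: M_def bs0)
  have key: "(M has_real_derivative (dc (s - b x s) / (1 + dc (s - b x s) * x)) * M x
              + (real (n - 1) * F x ^ (n - 2) * f x / F x ^ (n - 1)) * (1 - M x)) (at x)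
         \<and> dc (s - b x s) \<ge> dc x0 \<and> real (n - 1) * F x ^ (n - 2) * f x / F x ^ (n - 1) \<ge> 0"
    if x: "0 < x" "x < V" for x
  proof -
    have x01: "0 < x" "x < 1" using x V01 by auto
    have xI: "x \<in> {0..1}" using x01 by simp
    have xV: "x \<in> {0..V}" using x by simp
    have atx: "at x within {0..1} = at x" using at_within_Icc_at[of 0 x 1] x01 by simp
    have ats: "at s within {0..1} = at s" using at_within_Icc_at[of 0 s 1] s01 by simp
    have t01: "0 < s - b x s" "s - b x s < 1" using tpos[OF xV] by auto
    have att: "at (s - b x s) within {0..1} = at (s - b x s)"
      using at_within_Icc_at[of 0 "s - b x s" 1] t01 by simp
    have tI: "s - b x s \<in> {0..1}" using t01 by simp
    have d_bs: "((\<lambda>w. bs w s) has_real_derivative bvs x s) (at x)"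
      using bs_dv[rule_format, OF xI sI] atx by simp
    have d_b: "((\<lambda>w. b w s) has_real_derivative bv x s) (at x)"
      using b_dv[rule_format, OF xI sI] atx by simp
    have d_c: "(c has_real_derivative dc (s - b x s)) (at (s - b x s))"
      using c_deriv[rule_format, OF tI] att by simp
    have d_dc: "(dc has_real_derivative ddc (s - b x s)) (at (s - b x s))"
      using dc_deriv[rule_format, OF tI] att by simp
    have d_br: "((\<lambda>r. b x r) has_real_derivative bs x s) (at s)"
      using b_ds[rule_format, OF xI sI] ats by simp
    have d_bvr: "((\<lambda>r. bv x r) has_real_derivative bvs x s) (at s)"
      using bv_ds[rule_format, OF xI sI] ats by simp
    define e where "e = dc (s - b x s)"
    define dd where "dd = ddc (s - b x s)"
    define H where "H = real (n - 1) * F x ^ (n - 2) * f x / F x ^ (n - 1)"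
    define D where "D = 1 - bs x s"
    define N where "N = c (s - b x s) * x - b x s"
    define W where "W = 1 + e * x"
    have Wpos: "W > 0"
    proof -
      have e: "e > -1" using dc_gt tI by (simp add: e_def)
      show ?thesis
      proof (cases "e \<ge> 0")
        case True thus ?thesis using x01 by (simp add: W_def add_pos_nonneg)
      next
        case False
        hence "e * x \<ge> e" using x01 by (simp add: mult_le_cancel_left1)
        thus ?thesis using e by (simp add: W_def)
      qed
    qed
    have bvx: "bv x s = H * (N / W)"
      using b_ode x01 sI tI by (simp add: H_def N_def W_def e_def)
    have g: "((\<lambda>r. r - b x r) has_real_derivative D) (at s)"
      unfolding D_def using DERIV_diff[OF DERIV_ident d_br] by simp
    have cg: "((\<lambda>r. c (r - b x r)) has_real_derivative e * D) (at s)"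
      unfolding e_def using DERIV_chain2[OF d_c g] by simp
    have dcg: "((\<lambda>r. dc (r - b x r)) has_real_derivative dd * D) (at s)"
      unfolding dd_def using DERIV_chain2[OF d_dc g] by simp
    have num: "((\<lambda>r. c (r - b x r) * x - b x r) has_real_derivative e * D * x - bs x s) (at s)"
      by (intro DERIV_diff DERIV_cmult_right cg d_br)
    have den0: "((\<lambda>r. 1 + dc (r - b x r) * x) has_real_derivative 0 + dd * D * x) (at s)"
      by (intro DERIV_add DERIV_const DERIV_cmult_right dcg)
    have den: "((\<lambda>r. 1 + dc (r - b x r) * x) has_real_derivative dd * D * x) (at s)"
      using den0 by simp
    have Phi: "((\<lambda>r. H * ((c (r - b x r) * x - b x r) / (1 + dc (r - b x r) * x))) has_real_derivative
                 H * (((e * D * x - bs x s) * W - N * (dd * D * x)) / (W * W))) (at s)"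
      using DERIV_cmult[OF DERIV_divide[OF num den], of H] Wpos
      by (simp add: W_def N_def e_def)
    have bx_c1: "continuous_on {0..1} (\<lambda>r. b x r)"
      by (rule DERIV_continuous_on[where D="\<lambda>r. bs x r"]) (use b_ds xI in blast)
    have gx_c: "continuous_on {0<..<1} (\<lambda>r. r - b x r)"
      by (intro continuous_intros continuous_on_subset[OF bx_c1]) auto
    define U where "U = {0<..<(1::real)} \<inter> (\<lambda>r. r - b x r) -` {0<..}"
    have openU: "open U" unfolding U_def
      by (rule continuous_open_preimage[OF gx_c]) auto
    have sU: "s \<in> U" unfolding U_def using s01 t01 by simp
    have Ueq: "H * ((c (r - b x r) * x - b x r) / (1 + dc (r - b x r) * x)) = bv x r" if r: "r \<in> U" for r
    proof -
      have r01: "0 < r" "r < 1" "0 < r - b x r" using r by (auto simp: U_def)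
      have "b x r \<ge> 0" using bnn[of x r] xI r01 by simp
      hence "r - b x r \<in> {0..1}" using r01 by simp
      moreover have "x \<in> {0<..1}" "r \<in> {0..1}" using x01 r01 by auto
      ultimately show ?thesis using b_ode by (simp add: H_def)
    qed
    have d_bvr2: "((\<lambda>r. bv x r) has_real_derivative
                 H * (((e * D * x - bs x s) * W - N * (dd * D * x)) / (W * W))) (at s)"
      by (rule has_field_derivative_transform_within_open[OF Phi openU sU Ueq])
    have bvs_eq: "bvs x s = H * (((e * D * x - bs x s) * W - N * (dd * D * x)) / (W * W))"
      using DERIV_unique[OF d_bvr d_bvr2] .
    have gv: "((\<lambda>v. s - b v s) has_real_derivative - bv x s) (at x)"
      using DERIV_diff[OF DERIV_const d_b] by simp
    have dcv: "((\<lambda>v. dc (s - b v s)) has_real_derivative dd * (- bv x s)) (at x)"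
      unfolding dd_def using DERIV_chain2[OF d_dc gv] by simp
    have pv: "((\<lambda>v. 1 - bs v s) has_real_derivative 0 - bvs x s) (at x)"
      by (intro DERIV_diff DERIV_const d_bs)
    have qv: "((\<lambda>v. 1 + dc (s - b v s) * v) has_real_derivative
               0 + (dc (s - b x s) * 1 + dd * (- bv x s) * x)) (at x)"
      by (intro DERIV_add DERIV_const DERIV_mult' dcv DERIV_ident)
    have Meq: "M = (\<lambda>v. (1 - bs v s) * (1 + dc (s - b v s) * v))"
      by (intro ext) (simp add: M_def)
    have Mder: "(M has_real_derivative (1 - bs x s) * (0 + (dc (s - b x s) * 1 + dd * (- bv x s) * x))
                  + (0 - bvs x s) * (1 + dc (s - b x s) * x)) (at x)"
      unfolding Meq by (rule DERIV_mult'[OF pv qv])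
    have Mx: "M x = D * W" by (simp add: M_def D_def W_def e_def)
    have bsD: "bs x s = 1 - D" by (simp add: D_def)
    have alg: "(1 - bs x s) * (0 + (dc (s - b x s) * 1 + dd * (- bv x s) * x))
                  + (0 - bvs x s) * (1 + dc (s - b x s) * x)
               = e / W * M x + H * (1 - M x)"
    proof -
      have "(1 - bs x s) * (0 + (dc (s - b x s) * 1 + dd * (- bv x s) * x))
                  + (0 - bvs x s) * (1 + dc (s - b x s) * x)
            = D * (e + dd * (- (H * (N / W))) * x)
              - H * (((e * D * x - (1 - D)) * W - N * (dd * D * x)) / (W * W)) * W"
        by (simp add: D_def e_def W_def bvx bvs_eq)
      also have "\<dots> = e / W * (D * W) + H * (1 - D * W)"
      proof -
        have W0: "W \<noteq> 0" using Wpos by simp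
        have s1: "H * (((e * D * x - (1 - D)) * W - N * (dd * D * x)) / (W * W)) * W
                 = H * (e * D * x - (1 - D)) - H * N * dd * D * x / W"
          using W0 by (simp add: field_simps)
        have s2: "D * (e + dd * (- (H * (N / W))) * x) = D * e - H * N * dd * D * x / W"
          using W0 by (simp add: field_simps)
        have s3: "e / W * (D * W) = D * e" using W0 by simp
        show ?thesis unfolding s1 s2 s3 by (simp add: W_def algebra_simps)
      qed
      finally show ?thesis by (simp add: Mx)
    qed
    have Fx: "F x \<ge> 0" using mono_onD[OF F_cdf(3), of 0 x] xI F_cdf(1) by simp
    have fx: "f x \<ge> 0"
    proof (rule ccontr)
      assume "\<not> f x \<ge> 0"
      hence "f x < 0" by simp
      moreover have "(F has_real_derivative f x) (at x)" using F_deriv[rule_format, OF xI] atx by simp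
      ultimately obtain d where d: "d > 0" "\<forall>h>0. h < d \<longrightarrow> F x > F (x + h)"
        using DERIV_neg_dec_right by blast
      define h where "h = min (d/2) ((1 - x)/2)"
      have h0: "h > 0" using d x01 unfolding h_def by simp
      have h1: "h \<le> d/2" unfolding h_def by (rule min.cobounded1)
      have h2: "h \<le> (1 - x)/2" unfolding h_def by (rule min.cobounded2)
      have h3: "x + h \<le> 1" using h2 x01(2) by (simp add: field_simps)
      have h: "h > 0" "h < d" "x + h \<le> 1" using h0 h1 h3 d(1) by linarith+
      have "F x \<le> F (x + h)" using mono_onD[OF F_cdf(3), of x "x + h"] xI h by simp
      with d h show False by fastforce
    qed
    have Hnn: "H \<ge> 0" unfolding H_def using Fx fx by simp
    have "dc (s - b x s) \<ge> dc x0" using x0 tI by blast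
    moreover have "(M has_real_derivative e / W * M x + H * (1 - M x)) (at x)"
      using Mder alg by simp
    ultimately show ?thesis using Hnn by (simp add: H_def e_def W_def)
  qed

  show "bs V s < 1"
  proof -
    have "M V > 0"
    proof (rule ccontr)
      assume "\<not> M V > 0"
      then obtain v1 v0 where vv: "0 \<le> v1" "v1 < v0" "v0 \<le> V" "M v0 = 0" "M v1 \<ge> 1"
          "\<forall>x. v1 < x \<and> x < v0 \<longrightarrow> 0 < M x \<and> M x < 1"
        using first_zero[OF M_c M0 V01(1)] by fastforce
      have "M v0 > 0"
      proof (rule growth[of v1 v0 M _ K])
        show "v1 < v0" by fact
        show "continuous_on {v1..v0} M" using M_c vv by (auto intro: continuous_on_subset)
        show "M v1 > 0" using vv by simp
        fix x assume x: "v1 < x" "x < v0"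
        define e where "e = dc (s - b x s)"
        define H where "H = real (n - 1) * F x ^ (n - 2) * f x / F x ^ (n - 1)"
        have k: "(M has_real_derivative e / (1 + e * x) * M x + H * (1 - M x)) (at x)"
             "e \<ge> dc x0" "H \<ge> 0"
          using key[of x] x vv unfolding e_def H_def by auto
        have Mx: "0 < M x" "M x < 1" using vv x by auto
        have "e / (1 + e * x) \<ge> - K"
          unfolding K_def using qb[OF \<delta>_def \<delta>pos k(2), of x] x vv V01 by auto
        hence "e / (1 + e * x) * M x \<ge> - K * M x" using Mx mult_right_mono[of "- K" "e / (1 + e * x)" "M x"] by linarith
        moreover have "H * (1 - M x) \<ge> 0" using k(3) Mx by simp
        ultimately show "(M has_real_derivative (e / (1 + e * x) * M x + H * (1 - M x))) (at x) \<and>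
            e / (1 + e * x) * M x + H * (1 - M x) \<ge> - K * M x" using k(1) by linarith
      qed
      with vv show False by simp
    qed
    moreover have "1 + dc (s - b V s) * V > 0"
    proof -
      have t: "s - b V s \<in> {0..1}" using tpos[of V] V01 by auto
      have e: "dc (s - b V s) > -1" using dc_gt t by auto
      show ?thesis
      proof (cases "dc (s - b V s) \<ge> 0")
        case True thus ?thesis using V01 by (simp add: add_pos_nonneg)
      next
        case False
        hence "dc (s - b V s) * V \<ge> dc (s - b V s)" using V01 by (simp add: mult_le_cancel_left1)
        thus ?thesis using e by linarith
      qed
    qed
    ultimately have "1 - bs V s > 0" unfolding M_def by (simp add: zero_less_mult_iff)
    thus ?thesis by simp
  qed
qed

end
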